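(* Let $\Gamma$ be a connected finite simple graph on $N\ge3$ vertices whose minimum vertex degree $d$ satisfies $d\ge3$. Then $\varepsilon\le\frac{\sqrt{d-1}}{d}<\frac12$.
   Context: For a finite simple graph $\Gamma=(V,E)$ without isolated vertices, $\deg v$ is the number of neighbours of $v$ and $\mathcal N(v)=\{w\in V: w\sim v\}$. The normalized Laplacian acts on functions $f:V\to\mathbb R$ by $\Delta f(v)=f(v)-\frac{1}{\deg v}\sum_{w\sim v}f(w)$; its eigenvalues are $0=\lambda_1\le\lambda_2\le\dots\le\lambda_N$, and $\varepsilon:=\min_i|1-\lambda_i|$. $d$ denotes the minimum vertex degree. *)

theory Defs
  imports Complex_Main
begin

definition simple_graph :: "'a set \<Rightarrow> ('a \<Rightarrow> 'a \<Rightarrow> bool) \<Rightarrow> bool" where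
  "simple_graph V E \<longleftrightarrow> finite V \<and> (\<forall>x y. E x y \<longrightarrow> x \<in> V \<and> y \<in> V)
     \<and> (\<forall>x y. E x y \<longrightarrow> E y x) \<and> (\<forall>x. \<not> E x x)"

definition graph_connected :: "'a set \<Rightarrow> ('a \<Rightarrow> 'a \<Rightarrow> bool) \<Rightarrow> bool" where
  "graph_connected V E \<longleftrightarrow> (\<forall>x\<in>V. \<forall>y\<in>V. E\<^sup>*\<^sup>* x y)"

definition nbrs :: "'a set \<Rightarrow> ('a \<Rightarrow> 'a \<Rightarrow> bool) \<Rightarrow> 'a \<Rightarrow> 'a set" where
  "nbrs V E v = {w\<in>V. E v w}"

definition deg :: "'a set \<Rightarrow> ('a \<Rightarrow> 'a \<Rightarrow> bool) \<Rightarrow> 'a \<Rightarrow> nat" where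
  "deg V E v = card (nbrs V E v)"

definition min_deg :: "'a set \<Rightarrow> ('a \<Rightarrow> 'a \<Rightarrow> bool) \<Rightarrow> nat" where
  "min_deg V E = Min (deg V E ` V)"

definition norm_lap :: "'a set \<Rightarrow> ('a \<Rightarrow> 'a \<Rightarrow> bool) \<Rightarrow> ('a \<Rightarrow> real) \<Rightarrow> 'a \<Rightarrow> real" where
  "norm_lap V E f v = f v - (\<Sum>w\<in>nbrs V E v. f w) / real (deg V E v)"

definition lap_eigenvalue :: "'a set \<Rightarrow> ('a \<Rightarrow> 'a \<Rightarrow> bool) \<Rightarrow> real \<Rightarrow> bool" where
  "lap_eigenvalue V E mu \<longleftrightarrow>
     (\<exists>f. (\<exists>v\<in>V. f v \<noteq> 0) \<and> (\<forall>v\<in>V. norm_lap V E f v = mu * f v))"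

definition spectral_eps :: "'a set \<Rightarrow> ('a \<Rightarrow> 'a \<Rightarrow> bool) \<Rightarrow> real" where
  "spectral_eps V E = Min {\<bar>1 - mu\<bar> | mu. lap_eigenvalue V E mu}"

end

theory Submission
  imports Defs "Jordan_Normal_Form.Schur_Decomposition"
begin


lemma prod_sums_ge:
  fixes a b :: "nat \<Rightarrow> real"
  assumes "\<And>j. j \<in> S \<Longrightarrow> 0 \<le> a j" "\<And>j. j \<in> S \<Longrightarrow> 0 \<le> b j" "finite S"
  shows "(\<Sum>j\<in>S. a j * b j) \<le> (\<Sum>j\<in>S. a j) * (\<Sum>j\<in>S. b j)"
proof -
  have "(\<Sum>j\<in>S. a j * b j) \<le> (\<Sum>j\<in>S. a j * (\<Sum>l\<in>S. b l))"
    by (intro sum_mono mult_left_mono member_le_sum) (use assms in auto)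
  also have "\<dots> = (\<Sum>j\<in>S. a j) * (\<Sum>j\<in>S. b j)" by (simp add: sum_distrib_right)
  finally show ?thesis .
qed

lemma comb_ineq:
  fixes A :: "nat \<Rightarrow> nat \<Rightarrow> real" and n :: nat and d :: real
  assumes nn: "\<And>i j. i < n \<Longrightarrow> j < n \<Longrightarrow> 0 \<le> A i j"
    and ub: "\<And>i j. i < n \<Longrightarrow> j < n \<Longrightarrow> A i j \<le> 1/d"
    and rs: "\<And>i. i < n \<Longrightarrow> (\<Sum>j<n. A i j) = 1"
    and d3: "d \<ge> 3"
  defines "M \<equiv> \<lambda>i k. \<Sum>j<n. A i j * A j k"
  shows "(\<Sum>i<n. \<Sum>k<n. M i k * M k i) - (1 + (d-1)/d^2) * (\<Sum>i<n. M i i) + (d-1)/d^2 * n \<ge> 0"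
    and "(\<Sum>i<n. M i i) \<le> n / d"
proof -
  define r where "r = (\<lambda>j i. A j i * A i j)"
  define g where "g = (\<lambda>i k. \<Sum>j<n. r j i * r j k)"
  have dpos: "d > 0" using d3 by simp
  have rnn: "0 \<le> r j i" if "j < n" "i < n" for i j using nn that by (simp add: r_def)
  have rub: "r j i \<le> 1/d^2" if "j < n" "i < n" for i j
  proof -
    have "A j i * A i j \<le> (1/d) * (1/d)"
      by (intro mult_mono) (use nn ub that dpos in auto)
    thus ?thesis by (simp add: r_def power2_eq_square)
  qed
  have Mjj: "M j j = (\<Sum>i<n. r j i)" for j by (simp add: M_def r_def)
  have xub: "M j j \<le> 1/d" if "j < n" for j
  proof -
    have "M j j \<le> (\<Sum>i<n. A j i * (1/d))" unfolding M_def
      by (intro sum_mono mult_left_mono) (use nn ub that in auto)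
    also have "\<dots> = 1/d" using rs[OF that] by (simp add: sum_divide_distrib[symmetric])
    finally show ?thesis .
  qed
  have xnn: "0 \<le> M j j" if "j < n" for j unfolding Mjj by (intro sum_nonneg rnn) (use that in auto)
  show "(\<Sum>i<n. M i i) \<le> n / d"
  proof -
    have "(\<Sum>i<n. M i i) \<le> (\<Sum>i<n. 1/d)" by (intro sum_mono xub) auto
    thus ?thesis by simp
  qed
  have Mg: "g i k \<le> M i k * M k i" if "i < n" "k < n" for i k
  proof -
    have "g i k = (\<Sum>j<n. (A i j * A j k) * (A k j * A j i))" unfolding g_def r_def
      by (intro sum.cong) (auto simp: algebra_simps)
    also have "\<dots> \<le> (\<Sum>j<n. A i j * A j k) * (\<Sum>j<n. A k j * A j i)"
      by (intro prod_sums_ge) (use nn that in auto)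
    finally show ?thesis by (simp add: M_def)
  qed
  have rowi: "(\<Sum>k<n. M i k * M k i) \<ge> (\<Sum>k<n. g i k) + (M i i * M i i - g i i)" if "i < n" for i
  proof -
    have "(\<Sum>k<n. M i k * M k i) \<ge> (\<Sum>k<n. g i k + (if k = i then M i i * M i i - g i i else 0))"
      by (intro sum_mono) (use Mg that in auto)
    also have "(\<Sum>k<n. g i k + (if k = i then M i i * M i i - g i i else 0)) = (\<Sum>k<n. g i k) + (M i i * M i i - g i i)"
      using that by (simp add: sum.distrib)
    finally show ?thesis .
  qed
  have T4: "(\<Sum>i<n. \<Sum>k<n. M i k * M k i) \<ge> (\<Sum>i<n. \<Sum>k<n. g i k) + (\<Sum>i<n. M i i * M i i) - (\<Sum>i<n. g i i)"
  proof -
    have "(\<Sum>i<n. \<Sum>k<n. M i k * M k i) \<ge> (\<Sum>i<n. (\<Sum>k<n. g i k) + (M i i * M i i - g i i))"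
      by (intro sum_mono rowi) auto
    thus ?thesis by (simp add: sum.distrib sum_subtractf)
  qed
  have G1: "(\<Sum>i<n. \<Sum>k<n. g i k) = (\<Sum>j<n. M j j * M j j)"
  proof -
    have "(\<Sum>i<n. \<Sum>k<n. g i k) = (\<Sum>i<n. \<Sum>k<n. \<Sum>j<n. r j i * r j k)" by (simp add: g_def)
    also have "\<dots> = (\<Sum>i<n. \<Sum>j<n. \<Sum>k<n. r j i * r j k)"
      by (rule sum.cong[OF refl], rule sum.swap)
    also have "\<dots> = (\<Sum>j<n. \<Sum>i<n. \<Sum>k<n. r j i * r j k)"
      by (rule sum.swap)
    also have "\<dots> = (\<Sum>j<n. (\<Sum>i<n. r j i) * (\<Sum>k<n. r j k))"
      by (simp add: sum_product)
    finally show ?thesis by (simp add: Mjj)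
  qed
  have G2: "(\<Sum>i<n. g i i) \<le> (\<Sum>j<n. M j j / d^2)"
  proof -
    have "(\<Sum>i<n. g i i) = (\<Sum>j<n. \<Sum>i<n. r j i * r j i)" unfolding g_def by (rule sum.swap)
    also have "\<dots> \<le> (\<Sum>j<n. \<Sum>i<n. r j i * (1/d^2))"
      by (intro sum_mono mult_left_mono rub rnn) auto
    also have "\<dots> = (\<Sum>j<n. M j j / d^2)" by (simp add: Mjj sum_divide_distrib)
    finally show ?thesis .
  qed
  have q: "0 \<le> 2 * (M j j * M j j) - M j j / d^2 - (1 + (d-1)/d^2) * M j j + (d-1)/d^2" if "j < n" for j
  proof -
    have e: "2 * (M j j * M j j) - M j j / d^2 - (1 + (d-1)/d^2) * M j j + (d-1)/d^2
        = 2 * ((1/d - M j j) * ((d-1)/(2*d) - M j j))"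
      using dpos by (simp add: field_simps power2_eq_square)
    have "1/d \<le> (d-1)/(2*d)" using d3 dpos by (simp add: field_simps)
    hence "0 \<le> (1/d - M j j) * ((d-1)/(2*d) - M j j)"
      using xub[OF that] by (intro mult_nonneg_nonneg) auto
    thus ?thesis using e by simp
  qed
  have "0 \<le> (\<Sum>j<n. 2 * (M j j * M j j) - M j j / d^2 - (1 + (d-1)/d^2) * M j j + (d-1)/d^2)"
    by (intro sum_nonneg q) auto
  also have "\<dots> = 2 * (\<Sum>j<n. M j j * M j j) - (\<Sum>j<n. M j j / d^2) - (1 + (d-1)/d^2) * (\<Sum>j<n. M j j) + (d-1)/d^2 * n"
    by (simp add: sum.distrib sum_subtractf sum_distrib_left)
  finally show "(\<Sum>i<n. \<Sum>k<n. M i k * M k i) - (1 + (d-1)/d^2) * (\<Sum>i<n. M i i) + (d-1)/d^2 * n \<ge> 0"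
    using T4 G1 G2 by linarith
qed




definition trc :: "'a::comm_ring_1 mat \<Rightarrow> 'a" where
  "trc X = (\<Sum>i<dim_row X. X $$ (i,i))"

lemma trc_comm:
  assumes "X \<in> carrier_mat n m" "Y \<in> carrier_mat m n"
  shows "trc (X * Y) = trc (Y * X)"
proof -
  have "trc (X * Y) = (\<Sum>i<n. \<Sum>k<m. X $$ (i,k) * Y $$ (k,i))"
    using assms by (simp add: trc_def scalar_prod_def lessThan_atLeast0)
  also have "\<dots> = (\<Sum>k<m. \<Sum>i<n. Y $$ (k,i) * X $$ (i,k))"
    by (subst sum.swap) (simp add: mult.commute)
  also have "\<dots> = trc (Y * X)"
    using assms by (simp add: trc_def scalar_prod_def lessThan_atLeast0)
  finally show ?thesis .
qed

lemma QPZ: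
  fixes P Q Z :: "'a::comm_ring_1 mat"
  assumes "P \<in> carrier_mat n n" "Q \<in> carrier_mat n n" "Q * P = 1\<^sub>m n" "Z \<in> carrier_mat n k"
  shows "Q * (P * Z) = Z"
proof -
  have "Q * (P * Z) = Q * P * Z" using assms by (intro assoc_mult_mat[symmetric]) auto
  thus ?thesis using assms left_mult_one_mat[OF assms(4)] by simp
qed

lemma trc_sim:
  fixes P Q Y :: "'a::comm_ring_1 mat"
  assumes "P \<in> carrier_mat n n" "Y \<in> carrier_mat n n" "Q \<in> carrier_mat n n" "Q * P = 1\<^sub>m n"
  shows "trc (P * Y * Q) = trc Y"
proof -
  have "trc (P * Y * Q) = trc (Q * (P * Y))" using assms by (intro trc_comm[of _ n n]) auto
  also have "Q * (P * Y) = Y" using assms by (intro QPZ) auto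
  finally show ?thesis .
qed

lemma sim_mult:
  fixes P Q Y Y' :: "'a::comm_ring_1 mat"
  assumes "P \<in> carrier_mat n n" "Y \<in> carrier_mat n n" "Q \<in> carrier_mat n n" "Q * P = 1\<^sub>m n"
    "Y' \<in> carrier_mat n n"
  shows "(P * Y * Q) * (P * Y' * Q) = P * (Y * Y') * Q"
proof -
  have e: "Q * (P * (Y' * Q)) = Y' * Q" using assms by (intro QPZ[of _ n _ _ n]) auto
  show ?thesis
    using assms by (simp add: assoc_mult_mat[of _ n n _ n _ n] e)
qed

lemma ut_mult:
  fixes X Y :: "'a::comm_ring_1 mat"
  assumes "X \<in> carrier_mat n n" "Y \<in> carrier_mat n n" "upper_triangular X" "upper_triangular Y"
  shows "upper_triangular (X * Y)" "\<And>i. i < n \<Longrightarrow> (X * Y) $$ (i,i) = X $$ (i,i) * Y $$ (i,i)"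
proof -
  show "upper_triangular (X * Y)"
  proof (rule upper_triangularI)
    fix i j assume ij: "j < i" "i < dim_row (X * Y)"
    have "(X * Y) $$ (i,j) = (\<Sum>k<n. X $$ (i,k) * Y $$ (k,j))"
      using assms ij by (simp add: scalar_prod_def lessThan_atLeast0)
    also have "\<dots> = 0"
    proof (rule sum.neutral, safe)
      fix k assume "k < n"
      show "X $$ (i,k) * Y $$ (k,j) = 0"
      proof (cases "k < i")
        case True thus ?thesis using assms ij upper_triangularD[OF assms(3), of k i] by auto
      next
        case False thus ?thesis using assms ij \<open>k<n\<close> upper_triangularD[OF assms(4), of j k] by auto
      qed
    qed
    finally show "(X * Y) $$ (i,j) = 0" .
  qed
  fix i assume i: "i < n"
  have "(X * Y) $$ (i,i) = (\<Sum>k<n. X $$ (i,k) * Y $$ (k,i))"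
    using assms i by (simp add: scalar_prod_def lessThan_atLeast0)
  also have "\<dots> = (\<Sum>k<n. if k = i then X $$ (i,i) * Y $$ (i,i) else 0)"
  proof (rule sum.cong[OF refl])
    fix k assume "k \<in> {..<n}"
    thus "X $$ (i,k) * Y $$ (k,i) = (if k = i then X $$ (i,i) * Y $$ (i,i) else 0)"
      using assms i upper_triangularD[OF assms(3), of k i] upper_triangularD[OF assms(4), of i k]
      by (cases "k < i") auto
  qed
  also have "\<dots> = X $$ (i,i) * Y $$ (i,i)" using i by simp
  finally show "(X * Y) $$ (i,i) = X $$ (i,i) * Y $$ (i,i)" .
qed




definition eigf :: "nat \<Rightarrow> (nat \<Rightarrow> nat \<Rightarrow> real) \<Rightarrow> real \<Rightarrow> (nat \<Rightarrow> real) \<Rightarrow> bool" where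
  "eigf n A e f \<longleftrightarrow> (\<exists>i<n. f i \<noteq> 0) \<and> (\<forall>i<n. (\<Sum>j<n. A i j * f j) = e * f i)"

definition cmat :: "nat \<Rightarrow> (nat \<Rightarrow> nat \<Rightarrow> real) \<Rightarrow> complex mat" where
  "cmat n A = mat n n (\<lambda>(i,j). complex_of_real (A i j))"

lemma cmat_carrier: "cmat n A \<in> carrier_mat n n" by (simp add: cmat_def)

lemma cmat_mult_vec:
  assumes "z \<in> carrier_vec n" "i < n"
  shows "(cmat n A *\<^sub>v z) $ i = (\<Sum>j<n. complex_of_real (A i j) * z $ j)"
  using assms by (simp add: cmat_def scalar_prod_def lessThan_atLeast0)

lemma eigf_eigenvalue:
  assumes "eigf n A e f"
  shows "eigenvalue (cmat n A) (complex_of_real e)"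
proof -
  define v where "v = vec n (\<lambda>i. complex_of_real (f i))"
  from assms obtain i where i: "i < n" "f i \<noteq> 0" unfolding eigf_def by auto
  have v: "v \<in> carrier_vec n" by (simp add: v_def)
  have "v \<noteq> 0\<^sub>v n"
  proof
    assume "v = 0\<^sub>v n"
    hence "v $ i = 0" using i by simp
    thus False using i by (simp add: v_def)
  qed
  moreover have "cmat n A *\<^sub>v v = complex_of_real e \<cdot>\<^sub>v v"
  proof (rule eq_vecI)
    show "dim_vec (cmat n A *\<^sub>v v) = dim_vec (complex_of_real e \<cdot>\<^sub>v v)"
      by (simp add: cmat_def v_def)
    fix k assume "k < dim_vec (complex_of_real e \<cdot>\<^sub>v v)"
    hence k: "k < n" by (simp add: v_def)
    have "(cmat n A *\<^sub>v v) $ k = (\<Sum>j<n. complex_of_real (A k j) * complex_of_real (f j))"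
      using cmat_mult_vec[OF v k] by (simp add: v_def)
    also have "\<dots> = complex_of_real (\<Sum>j<n. A k j * f j)" by simp
    also have "\<dots> = complex_of_real (e * f k)" using assms k unfolding eigf_def by simp
    finally show "(cmat n A *\<^sub>v v) $ k = (complex_of_real e \<cdot>\<^sub>v v) $ k" using k by (simp add: v_def)
  qed
  ultimately show ?thesis using v unfolding eigenvalue_def eigenvector_def
    by (auto simp: cmat_def)
qed

locale wgraph =
  fixes n :: nat and A :: "nat \<Rightarrow> nat \<Rightarrow> real" and w :: "nat \<Rightarrow> real" and d :: real
  assumes nn: "\<And>i j. i < n \<Longrightarrow> j < n \<Longrightarrow> 0 \<le> A i j"
    and ub: "\<And>i j. i < n \<Longrightarrow> j < n \<Longrightarrow> A i j \<le> 1/d"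
    and rs: "\<And>i. i < n \<Longrightarrow> (\<Sum>j<n. A i j) = 1"
    and d3: "d \<ge> 3"
    and npos: "n > 0"
    and wpos: "\<And>i. i < n \<Longrightarrow> w i > 0"
    and wsym: "\<And>i j. i < n \<Longrightarrow> j < n \<Longrightarrow> w i * A i j = w j * A j i"
begin

abbreviation "C \<equiv> cmat n A"

lemma eig_props:
  assumes "eigenvalue C e"
  shows "Im e = 0" "cmod e \<le> 1" "\<exists>f. eigf n A (Re e) f"
proof -
  from assms obtain z where z: "z \<in> carrier_vec n" "z \<noteq> 0\<^sub>v n" "C *\<^sub>v z = e \<cdot>\<^sub>v z"
    unfolding eigenvalue_def eigenvector_def by (auto simp: cmat_def)
  have eq: "(\<Sum>j<n. complex_of_real (A i j) * z $ j) = e * z $ i" if "i < n" for i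
  proof -
    have "(C *\<^sub>v z) $ i = (e \<cdot>\<^sub>v z) $ i" using z by simp
    thus ?thesis using cmat_mult_vec[OF z(1) that] that z(1) by simp
  qed
  obtain i1 where i1: "i1 < n" "z $ i1 \<noteq> 0"
  proof -
    have "\<exists>i<n. z $ i \<noteq> 0"
    proof (rule ccontr)
      assume "\<not> ?thesis"
      hence "z = 0\<^sub>v n" using z(1) by (intro eq_vecI) auto
      thus False using z(2) by simp
    qed
    thus ?thesis using that by auto
  qed
  define S where "S = (\<Sum>i<n. \<Sum>j<n. complex_of_real (w i * A i j) * (cnj (z $ i) * z $ j))"
  define W where "W = (\<Sum>i<n. w i * (cmod (z $ i))^2)"
  have S1: "S = e * complex_of_real W"
  proof -
    have "S = (\<Sum>i<n. complex_of_real (w i) * cnj (z $ i) * (\<Sum>j<n. complex_of_real (A i j) * z $ j))"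
      unfolding S_def by (simp add: sum_distrib_left algebra_simps)
    also have "\<dots> = (\<Sum>i<n. complex_of_real (w i) * cnj (z $ i) * (e * z $ i))"
      by (intro sum.cong refl) (simp add: eq)
    also have "\<dots> = e * (\<Sum>i<n. complex_of_real (w i) * (z $ i * cnj (z $ i)))"
      by (simp add: sum_distrib_left algebra_simps)
    also have "\<dots> = e * complex_of_real W"
      unfolding W_def by (simp add: complex_norm_square[symmetric] mult.commute)
    finally show ?thesis .
  qed
  have S2: "cnj S = S"
  proof -
    have "cnj S = (\<Sum>i<n. \<Sum>j<n. complex_of_real (w i * A i j) * (z $ i * cnj (z $ j)))"
      unfolding S_def by simp
    also have "\<dots> = (\<Sum>j<n. \<Sum>i<n. complex_of_real (w i * A i j) * (z $ i * cnj (z $ j)))"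
      by (rule sum.swap)
    also have "\<dots> = (\<Sum>j<n. \<Sum>i<n. complex_of_real (w j * A j i) * (cnj (z $ j) * z $ i))"
      by (intro sum.cong refl) (simp add: wsym mult.commute)
    also have "\<dots> = S" unfolding S_def by simp
    finally show ?thesis .
  qed
  have Wpos: "W > 0"
  proof -
    have "W \<ge> w i1 * (cmod (z $ i1))^2" unfolding W_def
      by (rule member_le_sum[where i=i1 and f="\<lambda>i. w i * (cmod (z $ i))^2"]) (use i1 wpos[THEN less_imp_le] in \<open>auto intro!: mult_nonneg_nonneg\<close>)
    moreover have "w i1 * (cmod (z $ i1))^2 > 0" using i1 wpos by simp
    ultimately show ?thesis by simp
  qed
  from S2 have "Im S = 0" by (metis cnj.sel(2) neg_equal_zero)
  with S1 have "Im e * W = 0" by simp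
  with Wpos show ime: "Im e = 0" by simp
  obtain i0 where i0: "i0 < n" "\<And>j. j < n \<Longrightarrow> cmod (z $ j) \<le> cmod (z $ i0)"
  proof -
    have fin: "finite ((\<lambda>j. cmod (z $ j)) ` {..<n})" by simp
    have ne: "(\<lambda>j. cmod (z $ j)) ` {..<n} \<noteq> {}" using npos by auto
    from Max_in[OF fin ne] obtain i0 where "i0 < n" "cmod (z $ i0) = Max ((\<lambda>j. cmod (z $ j)) ` {..<n})" by auto
    moreover have "cmod (z $ j) \<le> Max ((\<lambda>j. cmod (z $ j)) ` {..<n})" if "j < n" for j
      using that fin by (intro Max_ge) auto
    ultimately show ?thesis using that by auto
  qed
  have z0: "cmod (z $ i0) > 0" using i0(2)[OF i1(1)] i1(2) by (metis le_less_trans not_le zero_less_norm_iff)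
  have "cmod e * cmod (z $ i0) = cmod (\<Sum>j<n. complex_of_real (A i0 j) * z $ j)"
    using eq[OF i0(1)] by (simp add: norm_mult)
  also have "\<dots> \<le> (\<Sum>j<n. cmod (complex_of_real (A i0 j) * z $ j))" by (rule norm_sum)
  also have "\<dots> = (\<Sum>j<n. A i0 j * cmod (z $ j))"
    by (intro sum.cong refl) (simp add: norm_mult nn i0(1))
  also have "\<dots> \<le> (\<Sum>j<n. A i0 j * cmod (z $ i0))"
    by (intro sum_mono mult_left_mono) (use i0 nn in auto)
  also have "\<dots> = cmod (z $ i0)" using rs[OF i0(1)] by (simp add: sum_distrib_right[symmetric])
  finally show "cmod e \<le> 1" using z0 by simp
  have e_real: "e = complex_of_real (Re e)" using ime by (simp add: complex_eq_iff)
  have req: "(\<Sum>j<n. A i j * Re (z $ j)) = Re e * Re (z $ i)"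
       "(\<Sum>j<n. A i j * Im (z $ j)) = Re e * Im (z $ i)" if "i < n" for i
  proof -
    have h: "(\<Sum>j<n. complex_of_real (A i j) * z $ j) = complex_of_real (Re e) * z $ i"
      using eq[OF that] e_real by simp
    from arg_cong[OF h, of Re] show "(\<Sum>j<n. A i j * Re (z $ j)) = Re e * Re (z $ i)"
      by (simp add: Re_sum)
    from arg_cong[OF h, of Im] show "(\<Sum>j<n. A i j * Im (z $ j)) = Re e * Im (z $ i)"
      by (simp add: Im_sum)
  qed
  show "\<exists>f. eigf n A (Re e) f"
  proof (cases "Re (z $ i1) = 0")
    case True
    hence "Im (z $ i1) \<noteq> 0" using i1(2) by (simp add: complex_eq_iff)
    thus ?thesis using req i1(1) unfolding eigf_def by (intro exI[of _ "\<lambda>j. Im (z $ j)"]) auto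
  next
    case False
    thus ?thesis using req i1(1) unfolding eigf_def by (intro exI[of _ "\<lambda>j. Re (z $ j)"]) auto
  qed
qed

end



context wgraph begin

lemma finite_eigs: "finite {e. \<exists>f. eigf n A e f}"
proof -
  obtain es where es: "char_poly C = (\<Prod>a\<leftarrow>es. [:- a, 1:])"
    using char_poly_factorized[OF cmat_carrier] by blast
  have "{e. \<exists>f. eigf n A e f} \<subseteq> Re ` set es"
  proof
    fix e assume "e \<in> {e. \<exists>f. eigf n A e f}"
    then obtain f where "eigf n A e f" by auto
    hence "eigenvalue C (complex_of_real e)" by (rule eigf_eigenvalue)
    hence "poly (char_poly C) (complex_of_real e) = 0"
      using eigenvalue_root_char_poly[OF cmat_carrier] by blast
    then obtain a where "a \<in> set es" "complex_of_real e = a"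
      unfolding es poly_prod_list_zero_iff by auto
    thus "e \<in> Re ` set es" by force
  qed
  thus ?thesis by (rule finite_subset) simp
qed

definition MM where "MM i k = (\<Sum>j<n. A i j * A j k)"

lemma CC_entry: "i < n \<Longrightarrow> k < n \<Longrightarrow> (C * C) $$ (i,k) = complex_of_real (MM i k)"
  by (simp add: cmat_def MM_def scalar_prod_def lessThan_atLeast0)

lemma trc_C2: "trc (C * C) = complex_of_real (\<Sum>i<n. MM i i)"
  using CC_entry by (simp add: trc_def cmat_def)

lemma trc_C4: "trc ((C * C) * (C * C)) = complex_of_real (\<Sum>i<n. \<Sum>k<n. MM i k * MM k i)"
proof -
  have "trc ((C * C) * (C * C)) = (\<Sum>i<n. \<Sum>k<n. (C * C) $$ (i,k) * (C * C) $$ (k,i))"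
    by (simp add: trc_def cmat_def scalar_prod_def lessThan_atLeast0)
  also have "\<dots> = (\<Sum>i<n. \<Sum>k<n. complex_of_real (MM i k * MM k i))"
    by (intro sum.cong refl) (simp add: CC_entry)
  finally show ?thesis by simp
qed

lemma exists_small: "\<exists>e f. eigf n A e f \<and> e^2 \<le> (d-1)/d^2"
proof -
  obtain es where es: "char_poly C = (\<Prod>a\<leftarrow>es. [:- a, 1:])" "length es = n"
    using char_poly_factorized[OF cmat_carrier] by blast
  obtain B P Q where sd: "schur_decomposition C es = (B,P,Q)" by (cases "schur_decomposition C es") auto
  from schur_decomposition[OF cmat_carrier es(1) sd]
  have sim: "similar_mat_wit C B P Q" and ut: "upper_triangular B" and dg: "diag_mat B = es" by auto
  from similar_mat_witD2[OF cmat_carrier sim]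
  have B: "B \<in> carrier_mat n n" and P: "P \<in> carrier_mat n n" and Q: "Q \<in> carrier_mat n n"
    and QP: "Q * P = 1\<^sub>m n" and CB: "C = P * B * Q" by auto
  have esi: "es ! i = B $$ (i,i)" if "i < n" for i
    using dg[symmetric] that B by (simp add: diag_mat_def)
  have ev: "eigenvalue C (es ! i)" if "i < n" for i
    using that es(2) eigenvalue_root_char_poly[OF cmat_carrier] linear_poly_root[of "es ! i" es] es(1)
    by auto
  define t where "t i = Re (es ! i)" for i
  have est: "es ! i = complex_of_real (t i)" if "i < n" for i
    using eig_props(1)[OF ev[OF that]] by (simp add: t_def complex_eq_iff)
  have tb: "\<bar>t i\<bar> \<le> 1" if "i < n" for i
    using eig_props(2)[OF ev[OF that]] est[OF that] by simp
  have BB: "B * B \<in> carrier_mat n n" using B by simp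
  have C2: "C * C = P * (B * B) * Q" using CB sim_mult[OF P B Q QP B] by simp
  have C4: "(C * C) * (C * C) = P * ((B * B) * (B * B)) * Q" using C2 sim_mult[OF P BB Q QP BB] by simp
  have trB2: "trc (B * B) = (\<Sum>i<n. (es ! i)^2)"
    using B ut_mult[OF B B ut ut] by (simp add: trc_def esi power2_eq_square)
  have trB4: "trc ((B * B) * (B * B)) = (\<Sum>i<n. (es ! i)^4)"
  proof -
    have "trc ((B * B) * (B * B)) = (\<Sum>i<n. (B * B) $$ (i,i) * (B * B) $$ (i,i))"
      using B ut_mult[OF BB BB ut_mult(1)[OF B B ut ut] ut_mult(1)[OF B B ut ut]] by (simp add: trc_def)
    also have "\<dots> = (\<Sum>i<n. (es ! i)^4)"
      by (intro sum.cong refl) (use ut_mult(2)[OF B B ut ut] esi in \<open>simp add: power4_eq_xxxx\<close>)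
    finally show ?thesis .
  qed
  have T2: "(\<Sum>i<n. (t i)^2) = (\<Sum>i<n. MM i i)"
  proof -
    have "complex_of_real (\<Sum>i<n. (t i)^2) = (\<Sum>i<n. (es ! i)^2)" by (simp add: est)
    also have "\<dots> = trc (C * C)" using trB2 trc_sim[OF P BB Q QP] C2 by simp
    also have "\<dots> = complex_of_real (\<Sum>i<n. MM i i)" by (rule trc_C2)
    finally show ?thesis by (simp only: of_real_eq_iff)
  qed
  have T4: "(\<Sum>i<n. (t i)^4) = (\<Sum>i<n. \<Sum>k<n. MM i k * MM k i)"
  proof -
    have "complex_of_real (\<Sum>i<n. (t i)^4) = (\<Sum>i<n. (es ! i)^4)" by (simp add: est)
    also have "\<dots> = trc ((C * C) * (C * C))"
      using trB4 trc_sim[OF P _ Q QP, of "(B * B) * (B * B)"] BB C4 by simp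
    also have "\<dots> = complex_of_real (\<Sum>i<n. \<Sum>k<n. MM i k * MM k i)" by (rule trc_C4)
    finally show ?thesis by (simp only: of_real_eq_iff)
  qed
  note cb = comb_ineq[of n A d, OF nn ub rs d3]
  have cb1: "(\<Sum>i<n. \<Sum>k<n. MM i k * MM k i) - (1 + (d-1)/d^2) * (\<Sum>i<n. MM i i) + (d-1)/d^2 * n \<ge> 0"
    using cb(1) by (simp add: MM_def)
  have cb2: "(\<Sum>i<n. MM i i) \<le> n / d" using cb(2) by (simp add: MM_def)
  define \<beta> where "\<beta> = (d-1)/d^2"
  show ?thesis
  proof (rule ccontr)
    assume "\<not> ?thesis"
    hence big: "(t i)^2 > \<beta>" if "i < n" for i
      using eig_props(3)[OF ev[OF that]] that unfolding \<beta>_def t_def by force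
    define p where "p x = (x^2 - \<beta>) * (1 - x^2)" for x :: real
    have pnn: "p (t i) \<ge> 0" if "i < n" for i
    proof -
      have "(t i)^2 \<le> 1" using tb[OF that] by (metis abs_le_square_iff abs_one one_power2)
      thus ?thesis using big[OF that] unfolding p_def by (intro mult_nonneg_nonneg) auto
    qed
    have "(\<Sum>i<n. p (t i)) = - (\<Sum>i<n. (t i)^4) + (1 + \<beta>) * (\<Sum>i<n. (t i)^2) - \<beta> * n"
      unfolding p_def by (simp add: algebra_simps sum.distrib sum_subtractf sum_distrib_left power4_eq_xxxx power2_eq_square)
    also have "\<dots> \<le> 0" using cb1 T2 T4 unfolding \<beta>_def by simp
    finally have "(\<Sum>i<n. p (t i)) \<le> 0" .
    hence "(\<Sum>i<n. p (t i)) = 0" using pnn by (intro antisym sum_nonneg) auto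
    hence p0: "p (t i) = 0" if "i < n" for i
      using sum_nonneg_eq_0_iff[of "{..<n}" "\<lambda>i. p (t i)"] pnn that by auto
    have t1: "(t i)^2 = 1" if "i < n" for i
      using p0[OF that] big[OF that] unfolding p_def by auto
    have "(\<Sum>i<n. (t i)^2) = n" using t1 by simp
    hence "real n \<le> n / d" using T2 cb2 by simp
    moreover have "n / d < n" using npos d3 by (simp add: divide_less_eq)
    ultimately show False by simp
  qed
qed

end



lemma main_aux:
  fixes V :: "'a set" and E :: "'a \<Rightarrow> 'a \<Rightarrow> bool"
  assumes sg: "simple_graph V E"
    and c3: "card V \<ge> 3"
    and d3: "min_deg V E \<ge> 3"
  shows "spectral_eps V E \<le> sqrt (real (min_deg V E) - 1) / real (min_deg V E)"
proof -
  define N where "N = card V"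
  define D where "D = min_deg V E"
  have finV: "finite V" using sg by (simp add: simple_graph_def)
  have Vne: "V \<noteq> {}" using c3 by auto
  obtain g where g: "bij_betw g {0..<N} V" using ex_bij_betw_nat_finite[OF finV] N_def by blast
  have g': "bij_betw g {..<N} V" using g by (simp add: lessThan_atLeast0)
  have gV: "g i \<in> V" if "i < N" for i using g' that by (auto simp: bij_betw_def)
  have degD: "D \<le> deg V E v" if "v \<in> V" for v
    unfolding D_def min_deg_def using finV that by (intro Min_le) auto
  have degpos: "deg V E v > 0" if "v \<in> V" for v using degD[OF that] d3 D_def by simp
  define A where "A i j = (if E (g i) (g j) then 1 / real (deg V E (g i)) else 0)" for i j
  define w where "w i = real (deg V E (g i))" for i
  have key: "(\<Sum>j<N. A i j * F (g j)) = (\<Sum>u\<in>nbrs V E (g i). F u) / real (deg V E (g i))"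
    if "i < N" for i and F :: "'a \<Rightarrow> real"
  proof -
    have "(\<Sum>j<N. A i j * F (g j)) = (\<Sum>u\<in>V. (if E (g i) u then 1 / real (deg V E (g i)) else 0) * F u)"
      unfolding A_def using sum.reindex_bij_betw[OF g', of "\<lambda>u. (if E (g i) u then 1 / real (deg V E (g i)) else 0) * F u"]
      by simp
    also have "\<dots> = (\<Sum>u\<in>V. if E (g i) u then F u / real (deg V E (g i)) else 0)"
      by (intro sum.cong refl) auto
    also have "\<dots> = (\<Sum>u\<in>nbrs V E (g i). F u / real (deg V E (g i)))"
      unfolding nbrs_def using finV by (simp add: sum.inter_filter)
    also have "\<dots> = (\<Sum>u\<in>nbrs V E (g i). F u) / real (deg V E (g i))"
      by (simp add: sum_divide_distrib)
    finally show ?thesis .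
  qed
  interpret wgraph N A w "real D"
  proof
    fix i j assume "i < N" "j < N"
    show "0 \<le> A i j" by (simp add: A_def)
    show "A i j \<le> 1 / real D"
      using degD[OF gV[OF \<open>i<N\<close>]] d3 D_def by (auto simp: A_def intro!: divide_left_mono)
    show "w i * A i j = w j * A j i"
      using sg degpos[OF gV[OF \<open>i<N\<close>]] degpos[OF gV[OF \<open>j<N\<close>]]
      unfolding A_def w_def simple_graph_def by auto
  next
    fix i assume i: "i < N"
    have "(\<Sum>j<N. A i j) = (\<Sum>j<N. A i j * (\<lambda>_. 1) (g j))" by simp
    also have "\<dots> = real (card (nbrs V E (g i))) / real (deg V E (g i))"
      by (subst key[OF i]) simp
    also have "\<dots> = 1" using degpos[OF gV[OF i]] by (simp add: deg_def)
    finally show "(\<Sum>j<N. A i j) = 1" .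
    show "w i > 0" using degpos[OF gV[OF i]] by (simp add: w_def)
  next
    show "3 \<le> real D" using d3 D_def by simp
    show "N > 0" using c3 N_def by simp
  qed
  have lap_of_eigf: "lap_eigenvalue V E (1 - e)" if "eigf N A e f" for e f
  proof -
    define F where "F v = f (inv_into {..<N} g v)" for v
    have Fg: "F (g j) = f j" if "j < N" for j
      unfolding F_def using g' that by (simp add: bij_betw_inv_into_left)
    have "\<exists>v\<in>V. F v \<noteq> 0"
    proof -
      from that obtain i where "i < N" "f i \<noteq> 0" unfolding eigf_def by auto
      thus ?thesis using Fg gV by metis
    qed
    moreover have "\<forall>v\<in>V. norm_lap V E F v = (1 - e) * F v"
    proof
      fix v assume "v \<in> V"
      then obtain i where i: "i < N" "v = g i" using g' by (auto simp: bij_betw_def)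
      have "(\<Sum>j<N. A i j * F (g j)) = (\<Sum>j<N. A i j * f j)" using Fg by simp
      also have "\<dots> = e * f i" using that i unfolding eigf_def by auto
      finally have "(\<Sum>u\<in>nbrs V E v. F u) / real (deg V E v) = e * F v"
        using key[OF i(1), of F] i Fg[OF i(1)] by simp
      thus "norm_lap V E F v = (1 - e) * F v" unfolding norm_lap_def by (simp add: algebra_simps)
    qed
    ultimately show ?thesis unfolding lap_eigenvalue_def by blast
  qed
  have eigf_of_lap: "eigf N A (1 - mu) (\<lambda>j. F (g j))"
    if "\<exists>v\<in>V. F v \<noteq> 0" "\<forall>v\<in>V. norm_lap V E F v = mu * F v" for mu F
  proof -
    have "\<exists>i<N. F (g i) \<noteq> 0"
      using that(1) g' by (auto simp: bij_betw_def)
    moreover have "(\<Sum>j<N. A i j * F (g j)) = (1 - mu) * F (g i)" if "i < N" for i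
      using key[OF that, of F] \<open>\<forall>v\<in>V. _\<close> gV[OF that] unfolding norm_lap_def
      by (auto simp: algebra_simps)
    ultimately show ?thesis unfolding eigf_def by auto
  qed
  define S where "S = {\<bar>1 - mu\<bar> | mu. lap_eigenvalue V E mu}"
  have "S \<subseteq> abs ` {e. \<exists>f. eigf N A e f}"
  proof
    fix x assume "x \<in> S"
    then obtain mu where x: "x = \<bar>1 - mu\<bar>" "lap_eigenvalue V E mu" unfolding S_def by auto
    then obtain F where "\<exists>v\<in>V. F v \<noteq> 0" "\<forall>v\<in>V. norm_lap V E F v = mu * F v"
      unfolding lap_eigenvalue_def by auto
    from eigf_of_lap[OF this] x show "x \<in> abs ` {e. \<exists>f. eigf N A e f}" by blast
  qed
  hence finS: "finite S" using finite_eigs finite_subset by blast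
  obtain e f where ef: "eigf N A e f" "e^2 \<le> (real D - 1) / (real D)^2" using exists_small by blast
  have "\<bar>e\<bar> \<in> S" unfolding S_def using lap_of_eigf[OF ef(1)] by force
  hence "spectral_eps V E \<le> \<bar>e\<bar>" unfolding spectral_eps_def S_def[symmetric] using finS by simp
  also have "\<bar>e\<bar> \<le> sqrt ((real D - 1) / (real D)^2)" using ef(2) by (intro real_le_rsqrt) simp
  also have "\<dots> = sqrt (real D - 1) / real D" by (simp add: real_sqrt_divide)
  finally show ?thesis by (simp add: D_def)
qed



lemma half_bound:
  fixes D :: real assumes "D \<ge> 3"
  shows "sqrt (D - 1) / D < 1 / 2"
proof -
  have p: "0 < (D - 2) * (D - 2)" using assms by simp
  have "D - 1 < (D/2)^2" using p by (simp add: power2_eq_square field_simps algebra_simps)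
  hence "sqrt (D - 1) < sqrt ((D/2)^2)" by (rule real_sqrt_less_mono)
  also have "sqrt ((D/2)^2) = D/2" using assms by simp
  finally show ?thesis using assms by (simp add: divide_less_eq)
qed

theorem mainTheorem5:
  fixes V :: "'a set" and E :: "'a \<Rightarrow> 'a \<Rightarrow> bool"
  assumes "simple_graph V E"
    and "graph_connected V E"
    and "card V \<ge> 3"
    and "min_deg V E \<ge> 3"
  shows "spectral_eps V E \<le> sqrt (real (min_deg V E) - 1) / real (min_deg V E)
       \<and> sqrt (real (min_deg V E) - 1) / real (min_deg V E) < 1 / 2"
  using main_aux[OF assms(1,3,4)] half_bound[of "real (min_deg V E)"] assms(4) by simp

end
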